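(* Let $1\le N\le M$ and $0\le n\le N$, let $\{u\}_n=\{u_1,\dots,u_n\}$, $\{v\}_N=\{v_1,\dots,v_N\}$, $\{w\}_M=\{w_1,\dots,w_M\}$ be complex variables, where $\{v\}_N$ satisfy the Bethe equations $$\prod_{j=1}^{M}\frac{[v_i-w_j+\gamma]}{[v_i-w_j]}=\prod_{j\ne i,\,1\le j\le N}\frac{[v_i-v_j+\gamma]}{[v_i-v_j-\gamma]},\qquad 1\le i\le N,$$ and $u_1,\dots,u_n$ are free. Put $\widetilde N=N-n$ and $$S_n=S_n(\{u\}_n,\{v\}_N,\{w\}_M)=\langle\Downarrow_{\widetilde N/M}|\prod_{i=1}^{n}C(u_i,\{w\}_M)\prod_{j=1}^{N}B(v_j,\{w\}_M)|\Uparrow_M\rangle$$ (for $n=0$ there are no $C$-operators and $S_0=S_0(\{v\}_N,\{w\}_M)$; for $n=N$ the bra is $\langle\Uparrow_M|$). Then for all $1\le n\le N$: (1) $S_n$ is symmetric in the variables $w_{\widetilde N+1},\dots,w_M$; (2) $S_n$ is a trigonometric polynomial of degree $M-1$ in $u_n$, vanishing at the points $u_n=w_i-\gamma$ for all $1\le i\le\widetilde N$; (3) $\displaystyle S_n\Big|_{u_n=w_{\widetilde N+1}}=\prod_{i=1}^{M}[w_{\widetilde N+1}-w_i+\gamma]\;S_{n-1}(\{u\}_{n-1},\{v\}_N,\{w\}_M)$. In addition, (4) $\displaystyle S_0(\{v\}_N,\{w\}_M)=\prod_{i=1}^{N}\prod_{j=N+1}^{M}[v_i-w_j]\;Z_N(\{v\}_N,\{w\}_N)$,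 where $\{w\}_N=\{w_1,\dots,w_N\}$ and $Z_N(\{v\}_N,\{w\}_N)=\langle\Downarrow_N|\prod_{i=1}^{N}B(v_i,\{w\}_N)|\Uparrow_N\rangle$ is computed on the chain with the $N$ sites $V_1,\dots,V_N$.
   Context: Notation: $[x]=\sinh x$, $\gamma$ a fixed complex parameter. Each site space $V_m\cong\mathbb{C}^2$ has basis $\uparrow_m=(1,0)^T$, $\downarrow_m=(0,1)^T$, with dual basis $\uparrow_m^*=(1\ 0)$, $\downarrow_m^*=(0\ 1)$. States on $V_1\otimes\cdots\otimes V_M$: $|\Uparrow_M\rangle=\bigotimes_{m=1}^M\uparrow_m$, $\langle\Uparrow_M|=\bigotimes_{m=1}^M\uparrow^*_m$, $\langle\Downarrow_M|=\bigotimes_{m=1}^M\downarrow^*_m$, and for $0\le K\le M$, $\langle\Downarrow_{K/M}|=\bigotimes_{m\le K}\downarrow^*_m\otimes\bigotimes_{K<m\le M}\uparrow^*_m$. The $R$-matrix $R_{ab}(u,v)\in\mathrm{End}(V_a\otimes V_b)$ ($V_a,V_b\cong\mathbb{C}^2$) is, in the ordered basis $(\uparrow\uparrow,\uparrow\downarrow,\downarrow\uparrow,\downarrow\downarrow)$ (first factor $V_a$), $$\begin{pmatrix}[u-v+\gamma]&0&0&0\\0&[u-v]&[\gamma]&0\\0&[\gamma]&[u-v]&0\\0&0&0&[u-v+\gamma]\end{pmatrix}.$$ The monodromy matrix with auxiliary space $V_a$ is $T_a(u,\{w\}_M)=R_{a1}(u,w_1)\cdots R_{aM}(u,w_M)$,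 written as $\begin{pmatrix}A(u,\{w\}_M)&B(u,\{w\}_M)\\C(u,\{w\}_M)&D(u,\{w\}_M)\end{pmatrix}_a$ in $V_a$ (rows/columns indexed by $\uparrow,\downarrow$), with entries operators on $V_1\otimes\cdots\otimes V_M$. The $C$-operators commute among themselves, as do the $B$-operators, so the products are unambiguous. A function $f$ is a trigonometric polynomial of degree $d$ in $x$ if $f=\sum_{k=0}^{d}c_k e^{(2k-d)x}$ with coefficients $c_k$ independent of $x$ (equivalently, a linear combination of products of $d$ functions $\sinh(x-a_i)$). *)

theory Defs
  imports Complex_Main "HOL-Combinatorics.Permutations"
begin

text \<open>Basis convention: a spin is a bool, False = up, True = down.
  A basis vector of V_1 (x) ... (x) V_M is a bool list of length M.\<close>

definition sh :: "complex \<Rightarrow> complex" where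
  "sh x = sinh x"

text \<open>Entry of the R-matrix R_ab(x) (x = u - v): row (a,s), column (a',s'),
  first factor the auxiliary space V_a.\<close>
definition Rent :: "complex \<Rightarrow> complex \<Rightarrow> bool \<Rightarrow> bool \<Rightarrow> bool \<Rightarrow> bool \<Rightarrow> complex" where
  "Rent g x a s a' s' =
     (if a = s \<and> a' = s' \<and> a = a' then sh (x + g)
      else if a \<noteq> s \<and> a' = a \<and> s' = s then sh x
      else if a \<noteq> s \<and> a' = s \<and> s' = a then sh g
      else 0)"

text \<open>Matrix element <xs| T_{a b}(u,{w}) |ys> of the monodromy matrix
  T_a = R_a1(u,w_1) ... R_aM(u,w_M).\<close>
fun mono :: "complex \<Rightarrow> complex \<Rightarrow> complex list \<Rightarrow> bool \<Rightarrow> bool \<Rightarrow> bool list \<Rightarrow> bool list \<Rightarrow> complex" where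
  "mono g u [] a b xs ys = (if a = b \<and> xs = [] \<and> ys = [] then 1 else 0)"
| "mono g u (w # ws) a b xs ys =
     (case (xs, ys) of
        (x # xs', y # ys') \<Rightarrow> (\<Sum>c\<in>(UNIV::bool set). Rent g (u - w) a x c y * mono g u ws c b xs' ys')
      | _ \<Rightarrow> 0)"

definition Bop :: "complex \<Rightarrow> complex \<Rightarrow> complex list \<Rightarrow> bool list \<Rightarrow> bool list \<Rightarrow> complex" where
  "Bop g u ws = mono g u ws False True"

definition Cop :: "complex \<Rightarrow> complex \<Rightarrow> complex list \<Rightarrow> bool list \<Rightarrow> bool list \<Rightarrow> complex" where
  "Cop g u ws = mono g u ws True False"

definition apply_op :: "nat \<Rightarrow> (bool list \<Rightarrow> bool list \<Rightarrow> complex) \<Rightarrow> (bool list \<Rightarrow> complex) \<Rightarrow> bool list \<Rightarrow> complex" where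
  "apply_op M A vec = (\<lambda>xs. \<Sum>ys\<in>{ys::bool list. length ys = M}. A xs ys * vec ys)"

definition up_state :: "nat \<Rightarrow> bool list \<Rightarrow> complex" where
  "up_state M = (\<lambda>xs. if xs = replicate M False then 1 else 0)"

text \<open>Configuration of the bra <Downarrow_{K/M}|: first K sites down, the rest up.\<close>
definition down_conf :: "nat \<Rightarrow> nat \<Rightarrow> bool list" where
  "down_conf K M = replicate K True @ replicate (M - K) False"

text \<open>S_n({u}_n,{v}_N,{w}_M) = <Downarrow_{(N-n)/M}| C(u_1)...C(u_n) B(v_1)...B(v_N) |Uparrow_M>,
  variables indexed from 1.\<close>
definition Sn :: "complex \<Rightarrow> nat \<Rightarrow> nat \<Rightarrow> nat \<Rightarrow> (nat \<Rightarrow> complex) \<Rightarrow> (nat \<Rightarrow> complex) \<Rightarrow> (nat \<Rightarrow> complex) \<Rightarrow> complex" where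
  "Sn g n N M u v w =
     (let ws = map w [1..<M+1] in
      foldr (apply_op M)
        (map (\<lambda>i. Cop g (u i) ws) [1..<n+1] @ map (\<lambda>j. Bop g (v j) ws) [1..<N+1])
        (up_state M) (down_conf (N - n) M))"

definition ZN :: "complex \<Rightarrow> nat \<Rightarrow> (nat \<Rightarrow> complex) \<Rightarrow> (nat \<Rightarrow> complex) \<Rightarrow> complex" where
  "ZN g N v w = Sn g 0 N N (\<lambda>_. 0) v w"

definition trig_poly :: "nat \<Rightarrow> (complex \<Rightarrow> complex) \<Rightarrow> bool" where
  "trig_poly d f \<longleftrightarrow> (\<exists>c::nat \<Rightarrow> complex. \<forall>x. f x = (\<Sum>k\<le>d. c k * exp (of_int (2 * int k - int d) * x)))"

end

theory Submission
  imports Defs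
begin

definition Qf where "Qf g u v w a b x z c d = (\<Sum>y\<in>(UNIV::bool set). Rent g (u - w) a x c y * Rent g (v - w) b y d z)"

lemma sh_exp: "sh z = (exp z - inverse (exp z)) / 2"
  by (simp add: sh_def sinh_def exp_minus scaleR_conv_of_real)

lemma ybe_local:
  "(\<Sum>c'\<in>UNIV. \<Sum>d'\<in>UNIV. Rent g (u - v) a b c' d' * Qf g u v w c' d' x z c d)
   = (\<Sum>c1\<in>UNIV. \<Sum>d1\<in>UNIV. Qf g v u w b a x z d1 c1 * Rent g (u - v) c1 d1 c d)"
  apply (cases a; cases b; cases x; cases z; cases c; cases d)
  apply (simp_all add: Qf_def Rent_def UNIV_bool sh_exp exp_diff exp_add)
  apply (simp_all add: field_simps)
  done

abbreviation LL :: "nat \<Rightarrow> bool list set" where "LL n \<equiv> {ys. length ys = n}"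

lemma finite_LL: "finite (LL n)"
  using finite_lists_length_eq[of "UNIV::bool set" n] by simp

lemma LL_Suc: "LL (Suc n) = (\<lambda>(y,ys). y # ys) ` (UNIV \<times> LL n)"
  by (auto simp: length_Suc_conv image_iff)

lemma sum_LL_Suc: "(\<Sum>ys\<in>LL (Suc n). f ys) = (\<Sum>y\<in>UNIV. \<Sum>ys\<in>LL n. f (y # ys))"
proof -
  have "inj_on (\<lambda>(y,ys). y # ys) (UNIV \<times> LL n)" by (auto simp: inj_on_def)
  then have "(\<Sum>ys\<in>LL (Suc n). f ys) = (\<Sum>p\<in>UNIV \<times> LL n. f (fst p # snd p))"
    unfolding LL_Suc by (subst sum.reindex) (auto simp: case_prod_beta)
  also have "\<dots> = (\<Sum>y\<in>UNIV. \<Sum>ys\<in>LL n. f (y # ys))"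
    by (simp add: sum.cartesian_product case_prod_beta)
  finally show ?thesis .
qed

lemma mono_nz: "mono g u ws a b xs ys \<noteq> 0 \<Longrightarrow> length xs = length ws \<and> length ys = length ws"
proof (induction ws arbitrary: a xs ys)
  case Nil then show ?case by (auto split: if_splits)
next
  case (Cons w ws)
  show ?case
  proof (cases xs; cases ys)
    fix x xs' y ys' assume xs: "xs = x # xs'" and ys: "ys = y # ys'"
    from Cons.prems xs ys obtain c where "Rent g (u - w) a x c y * mono g u ws c b xs' ys' \<noteq> 0"
      by (auto elim: sum.not_neutral_contains_not_neutral)
    then have "mono g u ws c b xs' ys' \<noteq> 0" by auto
    from Cons.IH[OF this] xs ys show ?thesis by simp
  qed (use Cons.prems in auto)
qed

lemma mono_Nil1[simp]: "mono g u (w#ws) a b [] ys = 0" by (cases ys) auto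
lemma mono_Nil2[simp]: "mono g u (w#ws) a b xs [] = 0" by (cases xs) auto
lemma mono_Cons[simp]: "mono g u (w#ws) a b (x#xs) (y#ys) = (\<Sum>c\<in>UNIV. Rent g (u - w) a x c y * mono g u ws c b xs ys)" by simp
declare mono.simps(2)[simp del]

definition mm :: "nat \<Rightarrow> (bool list \<Rightarrow> bool list \<Rightarrow> complex) \<Rightarrow> (bool list \<Rightarrow> bool list \<Rightarrow> complex) \<Rightarrow> bool list \<Rightarrow> bool list \<Rightarrow> complex" where
  "mm n A B xs zs = (\<Sum>ys\<in>LL n. A xs ys * B ys zs)"

lemma apply_op_mm: "apply_op n A (apply_op n B V) = apply_op n (mm n A B) V"
  unfolding apply_op_def mm_def
  by (auto simp: fun_eq_iff sum_distrib_left sum_distrib_right mult.assoc intro: sum.swap)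

lemma mm_cons: "mm (Suc n) (mono g u (w#ws) c e) (mono g v (w#ws) d f) (x#xs) (z#zs)
  = (\<Sum>c1\<in>UNIV. \<Sum>d1\<in>UNIV. Qf g u v w c d x z c1 d1 * mm n (mono g u ws c1 e) (mono g v ws d1 f) xs zs)"
  unfolding mm_def Qf_def
  apply (simp add: sum_LL_Suc UNIV_bool sum_distrib_left sum_distrib_right sum.distrib[symmetric])
  apply (rule sum.cong[OF refl])
  apply (simp add: algebra_simps)
  done

lemma rtt: "length ws = n \<Longrightarrow>
  (\<Sum>c\<in>UNIV. \<Sum>d\<in>UNIV. Rent g (u - v) a b c d * mm n (mono g u ws c e) (mono g v ws d f) xs zs)
  = (\<Sum>c\<in>UNIV. \<Sum>d\<in>UNIV. mm n (mono g v ws b d) (mono g u ws a c) xs zs * Rent g (u - v) c d e f)"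
proof (induction ws arbitrary: n a b xs zs)
  case Nil
  then show ?case by (simp add: mm_def UNIV_bool Rent_def)
next
  case (Cons w ws)
  then obtain n' where n: "n = Suc n'" "length ws = n'" by auto
  show ?case
  proof (cases xs; cases zs)
    fix x xs' z zs' assume xs: "xs = x # xs'" and zs: "zs = z # zs'"
    let ?m = "\<lambda>u v c1 d1 e f. mm n' (mono g u ws c1 e) (mono g v ws d1 f) xs' zs'"
    have "(\<Sum>c\<in>UNIV. \<Sum>d\<in>UNIV. Rent g (u - v) a b c d * mm n (mono g u (w#ws) c e) (mono g v (w#ws) d f) xs zs)
      = (\<Sum>c\<in>UNIV. \<Sum>d\<in>UNIV. Rent g (u - v) a b c d * (\<Sum>c1\<in>UNIV. \<Sum>d1\<in>UNIV. Qf g u v w c d x z c1 d1 * ?m u v c1 d1 e f))"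
      by (simp add: n xs zs mm_cons)
    also have "\<dots> = (\<Sum>c1\<in>UNIV. \<Sum>d1\<in>UNIV. (\<Sum>c\<in>UNIV. \<Sum>d\<in>UNIV. Rent g (u - v) a b c d * Qf g u v w c d x z c1 d1) * ?m u v c1 d1 e f)"
      by (simp add: UNIV_bool algebra_simps)
    also have "\<dots> = (\<Sum>c1\<in>UNIV. \<Sum>d1\<in>UNIV. (\<Sum>c2\<in>UNIV. \<Sum>d2\<in>UNIV. Qf g v u w b a x z d2 c2 * Rent g (u - v) c2 d2 c1 d1) * ?m u v c1 d1 e f)"
      by (simp only: ybe_local)
    also have "\<dots> = (\<Sum>c2\<in>UNIV. \<Sum>d2\<in>UNIV. Qf g v u w b a x z d2 c2 * (\<Sum>c1\<in>UNIV. \<Sum>d1\<in>UNIV. Rent g (u - v) c2 d2 c1 d1 * ?m u v c1 d1 e f))"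
      by (simp add: UNIV_bool algebra_simps)
    also have "\<dots> = (\<Sum>c2\<in>UNIV. \<Sum>d2\<in>UNIV. Qf g v u w b a x z d2 c2 * (\<Sum>c\<in>UNIV. \<Sum>d\<in>UNIV. ?m v u d2 c2 d c * Rent g (u - v) c d e f))"
      using Cons.IH[OF n(2)] by simp
    also have "\<dots> = (\<Sum>c\<in>UNIV. \<Sum>d\<in>UNIV. (\<Sum>d2\<in>UNIV. \<Sum>c2\<in>UNIV. Qf g v u w b a x z d2 c2 * ?m v u d2 c2 d c) * Rent g (u - v) c d e f)"
      by (simp add: UNIV_bool algebra_simps)
    also have "\<dots> = (\<Sum>c\<in>UNIV. \<Sum>d\<in>UNIV. mm n (mono g v (w#ws) b d) (mono g u (w#ws) a c) xs zs * Rent g (u - v) c d e f)"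
      by (simp add: n xs zs mm_cons)
    finally show ?thesis .
  qed (auto simp: mm_def n)
qed

lemma cont_Rent: "continuous_on UNIV X \<Longrightarrow> continuous_on UNIV (\<lambda>t. Rent g (X t) a s a' s')"
  unfolding Rent_def sh_def by (cases a; cases s; cases a'; cases s') (auto intro!: continuous_intros)

lemma cont_mono:
  assumes U: "continuous_on UNIV U" and F: "\<forall>F\<in>set Fs. continuous_on UNIV F"
  shows "continuous_on UNIV (\<lambda>t. mono g (U t) (map (\<lambda>F. F t) Fs) a b xs ys)"
  using F
proof (induction Fs arbitrary: a xs ys)
  case Nil then show ?case by simp
next
  case (Cons F Fs)
  show ?case
  proof (cases xs; cases ys)
    fix x xs' y ys' assume "xs = x # xs'" "ys = y # ys'"
    moreover have "continuous_on UNIV (\<lambda>t. U t - F t)" using U Cons.prems by (auto intro!: continuous_intros)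
    ultimately show ?thesis using Cons
      by (auto intro!: continuous_intros cont_Rent)
  qed auto
qed

lemma sh_zero_Re: "sh z = 0 \<Longrightarrow> Re z = 0"
proof -
  assume "sh z = 0"
  then have "exp z \<in> {1, -1}" by (simp add: sh_def sinh_zero_iff)
  then have "exp (Re z) = 1" by (metis norm_exp_eq_Re norm_one norm_minus_cancel insertE empty_iff)
  then show "Re z = 0" by simp
qed

lemma cancel_sh:
  assumes cf: "continuous_on UNIV f" and h: "\<And>t. sh (t + a) * f t = 0"
  shows "f t0 = 0"
proof -
  define \<sigma> :: real where "\<sigma> = (if Re (t0 + a) \<ge> 0 then 1 else -1)"
  define s where "s = (\<lambda>n. t0 + of_real (\<sigma> / (real n + 1)))"
  have "sh (s n + a) \<noteq> 0" for n
  proof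
    assume "sh (s n + a) = 0"
    then have "Re (s n + a) = 0" by (rule sh_zero_Re)
    moreover have "Re (s n + a) = Re (t0 + a) + \<sigma> / (real n + 1)" by (simp add: s_def)
    moreover have "Re (t0 + a) \<ge> 0 \<Longrightarrow> \<sigma> / (real n + 1) > 0" "\<not> Re (t0 + a) \<ge> 0 \<Longrightarrow> \<sigma> / (real n + 1) < 0"
      by (simp_all add: \<sigma>_def)
    ultimately show False by (cases "Re (t0 + a) \<ge> 0") linarith+
  qed
  then have fz: "f (s n) = 0" for n using h[of "s n"] by simp
  have "(\<lambda>n. \<sigma> * inverse (real (Suc n))) \<longlonglongrightarrow> \<sigma> * 0"
    by (intro tendsto_mult tendsto_const LIMSEQ_inverse_real_of_nat)
  then have "(\<lambda>n. \<sigma> / (real n + 1)) \<longlonglongrightarrow> 0"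
    by (simp add: divide_inverse add.commute)
  then have "(\<lambda>n. of_real (\<sigma> / (real n + 1)) :: complex) \<longlonglongrightarrow> of_real 0"
    by (rule tendsto_of_real)
  then have "(\<lambda>n. t0 + of_real (\<sigma> / (real n + 1))) \<longlonglongrightarrow> t0 + of_real 0"
    by (intro tendsto_add tendsto_const)
  then have "s \<longlonglongrightarrow> t0" unfolding s_def by simp
  moreover have "isCont f t0" using cf by (simp add: continuous_on_eq_continuous_at)
  ultimately have "(\<lambda>n. f (s n)) \<longlonglongrightarrow> f t0" by (rule isCont_tendsto_compose[rotated])
  then show ?thesis using fz by (simp add: LIMSEQ_const_iff)
qed

lemma cont_mm:
  assumes "\<And>xs ys. continuous_on UNIV (\<lambda>t. A t xs ys)" "\<And>xs ys. continuous_on UNIV (\<lambda>t. B t xs ys)"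
  shows "continuous_on UNIV (\<lambda>t. mm n (A t) (B t) xs zs)"
  unfolding mm_def by (intro continuous_intros assms)

lemma Cop_comm: "length ws = n \<Longrightarrow> mm n (Cop g u ws) (Cop g v ws) = mm n (Cop g v ws) (Cop g u ws)"
proof (intro ext)
  fix xs zs assume len: "length ws = n"
  let ?f = "\<lambda>t. mm n (Cop g t ws) (Cop g v ws) xs zs - mm n (Cop g v ws) (Cop g t ws) xs zs"
  have cm: "continuous_on UNIV (\<lambda>t. mono g t ws a b xs ys)" for a b xs ys
    using cont_mono[of "\<lambda>t. t" "map (\<lambda>w t. w) ws" g a b xs ys] by (simp add: o_def continuous_on_id)
  have "continuous_on UNIV ?f" unfolding Cop_def
    by (intro continuous_intros cont_mm cm)
  moreover have "sh (t + (g - v)) * ?f t = 0" for t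
    using rtt[OF len, of g t v True True False False xs zs]
    by (simp add: UNIV_bool Rent_def Cop_def algebra_simps)
  ultimately show "mm n (Cop g u ws) (Cop g v ws) xs zs = mm n (Cop g v ws) (Cop g u ws) xs zs"
    using cancel_sh[of ?f "g - v" u] by simp
qed

lemma Rent_TT: "Rent g x True True c y = (if c \<and> y then sh (x + g) else 0)"
  by (cases c; cases y) (auto simp: Rent_def)
lemma Rent_FF: "Rent g x False False c y = (if \<not> c \<and> \<not> y then sh (x + g) else 0)"
  by (cases c; cases y) (auto simp: Rent_def)
lemma Rent_TF: "Rent g x True False c y = (if c \<and> \<not> y then sh x else if \<not> c \<and> y then sh g else 0)"
  by (cases c; cases y) (auto simp: Rent_def)

lemma mono_downs:
  "k \<le> length ws \<Longrightarrow> mono g u ws True b (replicate k True @ rest) ys =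
    (if take k ys = replicate k True then prod_list (map (\<lambda>w. sh (u - w + g)) (take k ws)) * mono g u (drop k ws) True b rest (drop k ys) else 0)"
proof (induction k arbitrary: ws ys)
  case 0 then show ?case by simp
next
  case (Suc k)
  then obtain w ws' where ws: "ws = w # ws'" and k: "k \<le> length ws'" by (cases ws) auto
  show ?case
  proof (cases ys)
    case Nil then show ?thesis by (simp add: ws)
  next
    case (Cons y ys')
    show ?thesis using Suc.IH[OF k, of ys'] by (simp add: ws Cons UNIV_bool Rent_TT)
  qed
qed

lemma mono_ups:
  "mono g u ws False b (replicate (length ws) False) ys =
    (if \<not> b \<and> ys = replicate (length ws) False then prod_list (map (\<lambda>w. sh (u - w + g)) ws) else 0)"
proof (induction ws arbitrary: ys)
  case Nil then show ?case by auto
next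
  case (Cons w ws)
  show ?case
  proof (cases ys)
    case Nil then show ?thesis by simp
  next
    case (Cons y ys')
    show ?thesis using Cons.IH[of ys'] by (auto simp: Cons UNIV_bool Rent_FF)
  qed
qed

lemma mono_TT_ups:
  "mono g u ws True True (replicate (length ws) False) ys =
    (if ys = replicate (length ws) False then prod_list (map (\<lambda>w. sh (u - w)) ws) else 0)"
proof (induction ws arbitrary: ys)
  case Nil then show ?case by auto
next
  case (Cons w ws)
  show ?case
  proof (cases ys)
    case Nil then show ?thesis by simp
  next
    case (Cons y ys')
    show ?thesis using Cons.IH[of ys'] by (auto simp: Cons UNIV_bool Rent_TF mono_ups)
  qed
qed

lemma Cop_down_zero:
  assumes "length ws = M" "K \<le> M" "i < K" "sh (x - ws ! i + g) = 0"
  shows "Cop g x ws (down_conf K M) ys = 0"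
proof -
  have "take K ws ! i = ws ! i" "i < length (take K ws)" using assms by auto
  then have "ws ! i \<in> set (take K ws)" by (metis nth_mem)
  then have "0 \<in> set (map (\<lambda>w. sh (x - w + g)) (take K ws))"
    unfolding set_map by (rule rev_image_eqI) (use assms(4) in simp)
  then have "prod_list (map (\<lambda>w. sh (x - w + g)) (take K ws)) = 0"
    by (simp only: prod_list_zero_iff)
  then show ?thesis using assms by (simp add: Cop_def down_conf_def mono_downs)
qed

lemma down_conf_Suc: "K < M \<Longrightarrow> down_conf (Suc K) M = replicate K True @ True # replicate (M - Suc K) False"
  by (simp add: down_conf_def replicate_app_Cons_same)

lemma Cop_down_step:
  assumes "length ws = M" "K < M" "x = ws ! K"
  shows "Cop g x ws (down_conf K M) ys =
     (if ys = down_conf (Suc K) M then prod_list (map (\<lambda>w. sh (x - w + g)) ws) else 0)"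
proof -
  have dc: "down_conf K M = replicate K True @ (False # replicate (length (drop (Suc K) ws)) False)"
    using assms by (simp add: down_conf_def replicate_Suc[symmetric] Suc_diff_Suc)
  have dws: "drop K ws = ws ! K # drop (Suc K) ws" using assms by (simp add: Cons_nth_drop_Suc)
  have wsplit: "ws = take K ws @ ws ! K # drop (Suc K) ws" using assms by (intro id_take_nth_drop) simp
  have P: "prod_list (map (\<lambda>w. sh (x - w + g)) ws) = prod_list (map (\<lambda>w. sh (x - w + g)) (take K ws)) * sh g * prod_list (map (\<lambda>w. sh (x - w + g)) (drop (Suc K) ws))"
    by (subst wsplit) (simp add: assms)
  have "Cop g x ws (down_conf K M) ys = (if take K ys = replicate K True then prod_list (map (\<lambda>w. sh (x - w + g)) (take K ws)) *
      mono g x (ws ! K # drop (Suc K) ws) True False (False # replicate (length (drop (Suc K) ws)) False) (drop K ys) else 0)"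
    unfolding Cop_def dc using assms by (simp add: mono_downs dws)
  also have "\<dots> = (if ys = down_conf (Suc K) M then prod_list (map (\<lambda>w. sh (x - w + g)) ws) else 0)"
  proof (cases "drop K ys")
    case Nil
    then have "ys \<noteq> down_conf (Suc K) M" using assms by (auto simp: down_conf_def)
    then show ?thesis using Nil by simp
  next
    case (Cons y ys')
    have eq: "(take K ys = replicate K True \<and> y \<and> ys' = replicate (length (drop (Suc K) ws)) False) \<longleftrightarrow> ys = down_conf (Suc K) M"
    proof
      assume h: "take K ys = replicate K True \<and> y \<and> ys' = replicate (length (drop (Suc K) ws)) False"
      have "ys = take K ys @ drop K ys" by simp
      also have "\<dots> = replicate K True @ True # replicate (M - Suc K) False" using h Cons assms
        by simp
      finally show "ys = down_conf (Suc K) M" using down_conf_Suc[OF assms(2)] by simp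
    next
      assume h: "ys = down_conf (Suc K) M"
      have "drop K ys = True # replicate (M - Suc K) False" "take K ys = replicate K True"
        using h down_conf_Suc[OF assms(2)] by simp_all
      then show "take K ys = replicate K True \<and> y \<and> ys' = replicate (length (drop (Suc K) ws)) False"
        using Cons assms by simp
    qed
    have len: "length (drop (Suc K) ws) = M - Suc K" using assms by simp
    have mu: "mono g x (drop (Suc K) ws) False False (replicate (M - Suc K) False) ys' =
      (if ys' = replicate (M - Suc K) False then prod_list (map (\<lambda>w. sh (x - w + g)) (drop (Suc K) ws)) else 0)"
      using mono_ups[of g x "drop (Suc K) ws" False ys'] len by simp
    have sh0: "sh 0 = 0" by (simp add: sh_def)
    have "mono g x (ws ! K # drop (Suc K) ws) True False (False # replicate (length (drop (Suc K) ws)) False) (drop K ys)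
      = (if y then sh g * mono g x (drop (Suc K) ws) False False (replicate (M - Suc K) False) ys' else 0)"
      using assms(1,3) by (simp add: Cons UNIV_bool Rent_TF len sh0)
    then show ?thesis
      using eq P mu assms(1) by (auto simp: mult.assoc)
  qed
  finally show ?thesis .
qed

lemma apply_op_comm: "mm n A B = mm n B A \<Longrightarrow> apply_op n A (apply_op n B V) = apply_op n B (apply_op n A V)"
  by (simp add: apply_op_mm)

lemma foldr_move:
  "(\<forall>X\<in>set Xs. mm n A X = mm n X A) \<Longrightarrow>
   foldr (apply_op n) (Xs @ A # Ys) V = apply_op n A (foldr (apply_op n) (Xs @ Ys) V)"
  by (induction Xs) (auto simp: apply_op_comm)

definition Fr where
  "Fr g n N M u v w = foldr (apply_op M)
        (map (\<lambda>i. Cop g (u i) (map w [1..<M+1])) [1..<n] @ map (\<lambda>j. Bop g (v j) (map w [1..<M+1])) [1..<N+1])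
        (up_state M)"

lemma Sn_front:
  assumes "1 \<le> n"
  shows "Sn g n N M (u(n:=x)) v w = apply_op M (Cop g x (map w [1..<M+1])) (Fr g n N M u v w) (down_conf (N-n) M)"
proof -
  let ?ws = "map w [1..<M+1]"
  have up: "[1..<n+1] = [1..<n] @ [n]" using assms by simp
  have mp: "map (\<lambda>i. Cop g ((u(n:=x)) i) ?ws) [1..<n] = map (\<lambda>i. Cop g (u i) ?ws) [1..<n]"
    by (rule map_cong) auto
  have "Sn g n N M (u(n:=x)) v w = foldr (apply_op M) (map (\<lambda>i. Cop g (u i) ?ws) [1..<n] @ Cop g x ?ws # map (\<lambda>j. Bop g (v j) ?ws) [1..<N+1]) (up_state M) (down_conf (N-n) M)"
    unfolding Sn_def Let_def up map_append mp by (simp del: upt_Suc)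
  also have "\<dots> = apply_op M (Cop g x ?ws) (Fr g n N M u v w) (down_conf (N-n) M)"
    unfolding Fr_def by (subst foldr_move) (auto intro: Cop_comm)
  finally show ?thesis .
qed

lemma Sn_prev:
  assumes "1 \<le> n" "n \<le> N"
  shows "Sn g (n - 1) N M u v w = Fr g n N M u v w (down_conf (N - n + 1) M)"
  using assms unfolding Sn_def Fr_def Let_def by (simp add: Suc_diff_le)

lemma sum_if_eq: "finite A \<Longrightarrow> d \<in> A \<Longrightarrow> (\<Sum>y\<in>A. (if y = d then P else 0) * f y) = (P::complex) * f d"
proof -
  assume "finite A" "d \<in> A"
  have "(\<Sum>y\<in>A. (if y = d then P else 0) * f y) = (\<Sum>y\<in>A. if y = d then P * f y else 0)"
    by (rule sum.cong) auto
  then show ?thesis using \<open>finite A\<close> \<open>d \<in> A\<close> by simp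
qed

lemma nthw: "k < M \<Longrightarrow> map w [1..<M+1] ! k = w (Suc k)"
  by (simp del: upt_Suc)

lemma part2b:
  assumes "1 \<le> n" "n \<le> N" "N \<le> M" "1 \<le> i" "i \<le> N - n"
  shows "Sn g n N M (u(n := w i - g)) v w = 0"
proof -
  let ?ws = "map w [1..<M+1]"
  have "Cop g (w i - g) ?ws (down_conf (N-n) M) ys = 0" for ys
  proof (rule Cop_down_zero[where i = "i - 1"])
    show "sh (w i - g - ?ws ! (i - 1) + g) = 0" using assms by (simp add: sh_def nthw del: upt_Suc)
  qed (use assms in auto)
  then show ?thesis using assms by (simp add: Sn_front apply_op_def)
qed

lemma part3:
  assumes "1 \<le> n" "n \<le> N" "N \<le> M"
  shows "Sn g n N M (u(n := w (N - n + 1))) v w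
              = (\<Prod>i=1..M. sh (w (N - n + 1) - w i + g)) * Sn g (n - 1) N M u v w"
proof -
  let ?ws = "map w [1..<M+1]"
  let ?x = "w (N - n + 1)"
  have cs: "Cop g ?x ?ws (down_conf (N-n) M) ys =
     (if ys = down_conf (Suc (N-n)) M then prod_list (map (\<lambda>w'. sh (?x - w' + g)) ?ws) else 0)" for ys
    by (rule Cop_down_step) (use assms in \<open>auto simp: nthw simp del: upt_Suc\<close>)
  have pl: "prod_list (map (\<lambda>w'. sh (?x - w' + g)) ?ws) = (\<Prod>i=1..M. sh (?x - w i + g))"
  proof -
    have "(\<Prod>i=1..M. sh (?x - w i + g)) = (\<Prod>i\<in>set [1..<M+1]. sh (?x - w i + g))"
      by (simp add: atLeastLessThanSuc_atLeastAtMost del: upt_Suc)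
    also have "\<dots> = prod_list (map (\<lambda>i. sh (?x - w i + g)) [1..<M+1])"
      by (rule prod.distinct_set_conv_list) simp
    finally show ?thesis by (simp add: o_def)
  qed
  have dl: "down_conf (Suc (N-n)) M \<in> LL M" using assms by (simp add: down_conf_def)
  have "Sn g n N M (u(n := ?x)) v w = apply_op M (Cop g ?x ?ws) (Fr g n N M u v w) (down_conf (N-n) M)"
    by (rule Sn_front) (use assms in simp)
  also have "\<dots> = (\<Sum>ys\<in>LL M. (if ys = down_conf (Suc (N-n)) M then prod_list (map (\<lambda>w'. sh (?x - w' + g)) ?ws) else 0) * Fr g n N M u v w ys)"
    unfolding apply_op_def cs by (rule refl)
  also have "\<dots> = prod_list (map (\<lambda>w'. sh (?x - w' + g)) ?ws) * Fr g n N M u v w (down_conf (Suc (N-n)) M)"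
    by (rule sum_if_eq[OF finite_LL dl])
  also have "\<dots> = (\<Prod>i=1..M. sh (?x - w i + g)) * Sn g (n - 1) N M u v w"
    using Sn_prev[OF assms(1,2), of g M u v w] pl by simp
  finally show ?thesis .
qed

lemma tp_zero: "trig_poly d (\<lambda>x. 0)"
  unfolding trig_poly_def by (rule exI[of _ "\<lambda>_. 0"]) simp

lemma tp_add: "trig_poly d f \<Longrightarrow> trig_poly d h \<Longrightarrow> trig_poly d (\<lambda>x. f x + h x)"
proof -
  assume "trig_poly d f" "trig_poly d h"
  then obtain c1 c2 where c1: "\<And>x. f x = (\<Sum>k\<le>d. c1 k * exp (of_int (2 * int k - int d) * x))"
    and c2: "\<And>x. h x = (\<Sum>k\<le>d. c2 k * exp (of_int (2 * int k - int d) * x))"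
    unfolding trig_poly_def by blast
  show ?thesis unfolding trig_poly_def
    by (rule exI[of _ "\<lambda>k. c1 k + c2 k"]) (simp add: c1 c2 distrib_right sum.distrib)
qed

lemma tp_cmult: "trig_poly d f \<Longrightarrow> trig_poly d (\<lambda>x. a * f x)"
proof -
  assume "trig_poly d f"
  then obtain c1 where c1: "\<And>x. f x = (\<Sum>k\<le>d. c1 k * exp (of_int (2 * int k - int d) * x))"
    unfolding trig_poly_def by blast
  show ?thesis unfolding trig_poly_def
    by (rule exI[of _ "\<lambda>k. a * c1 k"]) (simp add: c1 sum_distrib_left mult.assoc)
qed

lemma tp_sum: "(\<And>i. i \<in> A \<Longrightarrow> trig_poly d (f i)) \<Longrightarrow> trig_poly d (\<lambda>x. \<Sum>i\<in>A. f i x)"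
proof (induction A rule: infinite_finite_induct)
  case (infinite A) then show ?case by (simp add: tp_zero)
next
  case empty then show ?case by (simp add: tp_zero)
next
  case (insert i A) then show ?case by (simp add: tp_add)
qed

lemma tp_up: "trig_poly d f \<Longrightarrow> trig_poly (Suc d) (\<lambda>x. exp x * f x)"
proof -
  assume "trig_poly d f"
  then obtain c where c: "\<And>x. f x = (\<Sum>k\<le>d. c k * exp (of_int (2 * int k - int d) * x))"
    unfolding trig_poly_def by blast
  show ?thesis unfolding trig_poly_def
  proof (intro exI allI)
    fix x :: complex
    have "exp x * f x = (\<Sum>k\<le>d. c k * exp (of_int (2 * int (Suc k) - int (Suc d)) * x))"
      unfolding c sum_distrib_left
      by (rule sum.cong) (auto simp: exp_add[symmetric] algebra_simps)
    also have "\<dots> = (\<Sum>k\<le>Suc d. (if k = 0 then 0 else c (k - 1)) * exp (of_int (2 * int k - int (Suc d)) * x))"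
      by (subst sum.atMost_Suc_shift) simp
    finally show "exp x * f x = (\<Sum>k\<le>Suc d. (if k = 0 then 0 else c (k - 1)) * exp (of_int (2 * int k - int (Suc d)) * x))" .
  qed
qed

lemma tp_down: "trig_poly d f \<Longrightarrow> trig_poly (Suc d) (\<lambda>x. exp (- x) * f x)"
proof -
  assume "trig_poly d f"
  then obtain c where c: "\<And>x. f x = (\<Sum>k\<le>d. c k * exp (of_int (2 * int k - int d) * x))"
    unfolding trig_poly_def by blast
  show ?thesis unfolding trig_poly_def
  proof (intro exI allI)
    fix x :: complex
    have "exp (- x) * f x = (\<Sum>k\<le>d. c k * exp (of_int (2 * int k - int (Suc d)) * x))"
      unfolding c sum_distrib_left
      by (rule sum.cong) (auto simp: exp_add[symmetric] algebra_simps)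
    also have "\<dots> = (\<Sum>k\<le>Suc d. (if k \<le> d then c k else 0) * exp (of_int (2 * int k - int (Suc d)) * x))"
      by (simp add: sum.atMost_Suc)
    finally show "exp (- x) * f x = (\<Sum>k\<le>Suc d. (if k \<le> d then c k else 0) * exp (of_int (2 * int k - int (Suc d)) * x))" .
  qed
qed

lemma tp_sh: "trig_poly d f \<Longrightarrow> trig_poly (Suc d) (\<lambda>x. sh (x + a) * f x)"
proof -
  assume f: "trig_poly d f"
  have "trig_poly (Suc d) (\<lambda>x. (exp a / 2) * (exp x * f x) + (- exp (- a) / 2) * (exp (- x) * f x))"
    by (intro tp_add tp_cmult tp_up tp_down f)
  moreover have "sh (x + a) * f x = (exp a / 2) * (exp x * f x) + (- exp (- a) / 2) * (exp (- x) * f x)" for x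
  proof -
    have "sh (x + a) = (exp x * exp a - inverse (exp x * exp a)) / 2"
      unfolding sh_exp exp_add ..
    also have "\<dots> = (exp a / 2) * exp x + (- exp (- a) / 2) * exp (- x)"
      by (simp add: exp_minus field_simps)
    finally have shx: "sh (x + a) = (exp a / 2) * exp x + (- exp (- a) / 2) * exp (- x)" .
    show ?thesis unfolding shx by (simp add: algebra_simps)
  qed
  ultimately show ?thesis by simp
qed

lemma tp_raise2: "trig_poly d f \<Longrightarrow> trig_poly (Suc (Suc d)) f"
proof -
  assume "trig_poly d f"
  then have "trig_poly (Suc (Suc d)) (\<lambda>x. exp (- x) * (exp x * f x))" by (intro tp_up tp_down)
  moreover have "exp (- x) * (exp x * f x) = f x" for x :: complex by (simp add: exp_minus)
  ultimately show ?thesis by simp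
qed

lemma Rent_same: "Rent g (x - w) a s a y = (if a = s \<and> a = y then sh (x + (g - w)) else if a \<noteq> s \<and> y = s then sh (x + (- w)) else 0)"
  by (cases a; cases s; cases y) (auto simp: Rent_def algebra_simps)

lemma Rent_other: "Rent g (x - w) a s (\<not> a) y = (if a \<noteq> s \<and> y = a then sh g else 0)"
  by (cases a; cases s; cases y) (auto simp: Rent_def)

lemma tp_Rent_same: "trig_poly d f \<Longrightarrow> trig_poly (Suc d) (\<lambda>x. Rent g (x - w) a s a y * f x)"
proof -
  assume f: "trig_poly d f"
  have "(\<lambda>x. Rent g (x - w) a s a y * f x) = (if a = s \<and> a = y then (\<lambda>x. sh (x + (g - w)) * f x)
     else if a \<noteq> s \<and> y = s then (\<lambda>x. sh (x + (- w)) * f x) else (\<lambda>x. 0))"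
    by (auto simp: Rent_same fun_eq_iff)
  then show ?thesis using tp_sh[OF f, of "g - w"] tp_sh[OF f, of "- w"] tp_zero[of "Suc d"] by simp
qed

lemma tp_mono:
  "(a = b \<longrightarrow> trig_poly (length ws) (\<lambda>x. mono g x ws a b xs ys)) \<and>
   (a \<noteq> b \<longrightarrow> (ws = [] \<longrightarrow> (\<forall>x. mono g x ws a b xs ys = 0)) \<and> (\<forall>d. Suc d = length ws \<longrightarrow> trig_poly d (\<lambda>x. mono g x ws a b xs ys)))"
proof (induction ws arbitrary: a xs ys)
  case Nil
  then show ?case unfolding trig_poly_def by (auto intro!: exI[of _ "\<lambda>_. if xs = [] \<and> ys = [] then 1 else 0"])
next
  case (Cons w ws)
  show ?case
  proof (cases xs; cases ys)
    fix x0 xs' y0 ys' assume xs: "xs = x0 # xs'" and ys: "ys = y0 # ys'"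
    have split: "mono g x (w # ws) a b xs ys = Rent g (x - w) a x0 a y0 * mono g x ws a b xs' ys'
        + Rent g (x - w) a x0 (\<not> a) y0 * mono g x ws (\<not> a) b xs' ys'" for x
      by (cases a) (simp_all add: xs ys UNIV_bool add.commute)
    have IH1: "trig_poly (length ws) (\<lambda>x. mono g x ws b b xs' ys')" using Cons.IH by blast
    have IH2: "c \<noteq> b \<Longrightarrow> ws = [] \<Longrightarrow> mono g x ws c b xs' ys' = 0" for c x using Cons.IH by blast
    have IH3: "c \<noteq> b \<Longrightarrow> Suc d = length ws \<Longrightarrow> trig_poly d (\<lambda>x. mono g x ws c b xs' ys')" for c d using Cons.IH by blast
    have const: "trig_poly e (\<lambda>x. Rent g (x - w) a x0 (\<not> a) y0 * h x)" if "trig_poly e h" for e h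
      unfolding Rent_other using that by (auto intro: tp_cmult simp: tp_zero)
    show ?thesis
    proof (intro conjI impI allI)
      assume ab: "a = b"
      have t1: "trig_poly (length (w # ws)) (\<lambda>x. Rent g (x - w) a x0 a y0 * mono g x ws a b xs' ys')"
        using IH1 ab by (simp add: tp_Rent_same)
      have t2: "trig_poly (length (w # ws)) (\<lambda>x. Rent g (x - w) a x0 (\<not> a) y0 * mono g x ws (\<not> a) b xs' ys')"
      proof (cases ws)
        case Nil then show ?thesis using IH2[of "\<not> a"] ab by (simp add: tp_zero)
      next
        case (Cons w' ws')
        then have "trig_poly (length ws - 1) (\<lambda>x. mono g x ws (\<not> a) b xs' ys')" using IH3[of "\<not> a"] ab by simp
        then have "trig_poly (length (w # ws)) (\<lambda>x. mono g x ws (\<not> a) b xs' ys')"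
          using tp_raise2 Cons by fastforce
        then show ?thesis by (rule const)
      qed
      show "trig_poly (length (w # ws)) (\<lambda>x. mono g x (w # ws) a b xs ys)"
        unfolding split by (rule tp_add[OF t1 t2])
    next
      assume "a \<noteq> b" "w # ws = []" then show "mono g x (w # ws) a b xs ys = 0" for x by simp
    next
      fix d assume ab: "a \<noteq> b" and d: "Suc d = length (w # ws)"
      have t1: "trig_poly d (\<lambda>x. Rent g (x - w) a x0 a y0 * mono g x ws a b xs' ys')"
      proof (cases ws)
        case Nil then show ?thesis using IH2[of a] ab by (simp add: tp_zero)
      next
        case (Cons w' ws')
        then obtain d' where d': "d = Suc d'" "Suc d' = length ws" using d by auto
        have "trig_poly d' (\<lambda>x. mono g x ws a b xs' ys')" using IH3[of a d'] ab d' by simp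
        then have "trig_poly (Suc d') (\<lambda>x. Rent g (x - w) a x0 a y0 * mono g x ws a b xs' ys')"
          by (rule tp_Rent_same)
        then show ?thesis using d' by simp
      qed
      have nb: "\<not> a = b" using ab by simp
      have t2: "trig_poly d (\<lambda>x. Rent g (x - w) a x0 (\<not> a) y0 * mono g x ws (\<not> a) b xs' ys')"
        using IH1 d nb by (intro const) (auto simp: nb[symmetric])
      show "trig_poly d (\<lambda>x. mono g x (w # ws) a b xs ys)"
        unfolding split by (rule tp_add[OF t1 t2])
    qed
  qed (auto simp: tp_zero)
qed

lemma part2a:
  assumes "1 \<le> n" "1 \<le> M"
  shows "trig_poly (M - 1) (\<lambda>x. Sn g n N M (u(n := x)) v w)"
proof -
  let ?ws = "map w [1..<M+1]"
  have l: "length ?ws = M" by simp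
  have "trig_poly (M - 1) (\<lambda>x. Cop g x ?ws xs ys)" for xs ys
    using tp_mono[of True False ?ws g xs ys] assms(2) l unfolding Cop_def by (simp del: upt_Suc)
  then have "trig_poly (M - 1) (\<lambda>x. apply_op M (Cop g x ?ws) (Fr g n N M u v w) (down_conf (N-n) M))"
    unfolding apply_op_def by (intro tp_sum) (simp add: mult.commute[of "Cop _ _ _ _ _"] tp_cmult)
  then show ?thesis using Sn_front[OF assms(1)] by simp
qed

lemma mono_append:
  "length xs1 = length ws1 \<Longrightarrow> length ys1 = length ws1 \<Longrightarrow>
   mono g u (ws1 @ ws2) a b (xs1 @ xs2) (ys1 @ ys2) = (\<Sum>c\<in>UNIV. mono g u ws1 a c xs1 ys1 * mono g u ws2 c b xs2 ys2)"
proof (induction ws1 arbitrary: a xs1 ys1)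
  case Nil then show ?case by (simp add: UNIV_bool)
next
  case (Cons w ws1)
  then obtain x xs1' y ys1' where xs: "xs1 = x # xs1'" "length xs1' = length ws1" and ys: "ys1 = y # ys1'" "length ys1' = length ws1"
    by (cases xs1; cases ys1) auto
  have "mono g u ((w # ws1) @ ws2) a b (xs1 @ xs2) (ys1 @ ys2)
     = (\<Sum>c\<in>UNIV. Rent g (u - w) a x c y * (\<Sum>d\<in>UNIV. mono g u ws1 c d xs1' ys1' * mono g u ws2 d b xs2 ys2))"
    using Cons.IH[OF xs(2) ys(2)] by (simp add: xs ys)
  also have "\<dots> = (\<Sum>d\<in>UNIV. mono g u (w # ws1) a d xs1 ys1 * mono g u ws2 d b xs2 ys2)"
    by (simp add: xs ys UNIV_bool algebra_simps)
  finally show ?case .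
qed

lemma sum_LL_append: "(\<Sum>ys\<in>LL (n + k). f ys) = (\<Sum>ys1\<in>LL n. \<Sum>ys2\<in>LL k. f (ys1 @ ys2))"
proof (induction n arbitrary: f)
  case 0 then show ?case by simp
next
  case (Suc n)
  have "(\<Sum>ys\<in>LL (Suc n + k). f ys) = (\<Sum>y\<in>UNIV. \<Sum>ys\<in>LL (n + k). f (y # ys))"
    using sum_LL_Suc[where n="n + k" and f=f] by simp
  also have "\<dots> = (\<Sum>y\<in>UNIV. \<Sum>ys1\<in>LL n. \<Sum>ys2\<in>LL k. f ((y # ys1) @ ys2))"
    using Suc.IH by simp
  also have "\<dots> = (\<Sum>ys1\<in>LL (Suc n). \<Sum>ys2\<in>LL k. f (ys1 @ ys2))"
    by (rule sum_LL_Suc[symmetric])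
  finally show ?case .
qed

lemma Bop_split:
  assumes "length xs1 = length ws1" "length ys1 = length ws1" "length ys2 = length ws2"
  shows "Bop g v (ws1 @ ws2) (xs1 @ replicate (length ws2) False) (ys1 @ ys2) =
     Bop g v ws1 xs1 ys1 * (if ys2 = replicate (length ws2) False then prod_list (map (\<lambda>w. sh (v - w)) ws2) else 0)"
  unfolding Bop_def using assms by (simp add: mono_append UNIV_bool mono_ups mono_TT_ups)

lemma foldr_B_split:
  assumes "length ws1 = N" "length ws2 = K" "length xs1 = N"
  shows "foldr (apply_op (N + K)) (map (\<lambda>x. Bop g x (ws1 @ ws2)) vs) (up_state (N + K)) (xs1 @ replicate K False)
    = prod_list (map (\<lambda>x. prod_list (map (\<lambda>w. sh (x - w)) ws2)) vs) *
      foldr (apply_op N) (map (\<lambda>x. Bop g x ws1) vs) (up_state N) xs1"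
  using assms(3)
proof (induction vs arbitrary: xs1)
  case Nil then show ?case by (auto simp: up_state_def replicate_add)
next
  case (Cons x vs)
  let ?F = "foldr (apply_op (N + K)) (map (\<lambda>x. Bop g x (ws1 @ ws2)) vs) (up_state (N + K))"
  let ?G = "foldr (apply_op N) (map (\<lambda>x. Bop g x ws1) vs) (up_state N)"
  let ?P = "\<lambda>x. prod_list (map (\<lambda>w. sh (x - w)) ws2)"
  have "foldr (apply_op (N + K)) (map (\<lambda>x. Bop g x (ws1 @ ws2)) (x # vs)) (up_state (N + K)) (xs1 @ replicate K False)
     = (\<Sum>ys1\<in>LL N. \<Sum>ys2\<in>LL K. Bop g x (ws1 @ ws2) (xs1 @ replicate K False) (ys1 @ ys2) * ?F (ys1 @ ys2))"
    by (simp add: apply_op_def sum_LL_append)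
  also have "\<dots> = (\<Sum>ys1\<in>LL N. \<Sum>ys2\<in>LL K. (if ys2 = replicate K False then Bop g x ws1 xs1 ys1 * ?P x * ?F (ys1 @ ys2) else 0))"
  proof (intro sum.cong refl)
    fix ys1 ys2 assume "ys1 \<in> LL N" "ys2 \<in> LL K"
    then show "Bop g x (ws1 @ ws2) (xs1 @ replicate K False) (ys1 @ ys2) * ?F (ys1 @ ys2) =
       (if ys2 = replicate K False then Bop g x ws1 xs1 ys1 * ?P x * ?F (ys1 @ ys2) else 0)"
      using Bop_split[of xs1 ws1 ys1 ys2 ws2 g x] Cons.prems assms by auto
  qed
  also have "\<dots> = (\<Sum>ys1\<in>LL N. Bop g x ws1 xs1 ys1 * ?P x * ?F (ys1 @ replicate K False))"
    by (simp add: sum.delta' finite_LL)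
  also have "\<dots> = (\<Sum>ys1\<in>LL N. Bop g x ws1 xs1 ys1 * ?P x * (prod_list (map ?P vs) * ?G ys1))"
    by (intro sum.cong refl) (simp add: Cons.IH)
  also have "\<dots> = prod_list (map ?P (x # vs)) * foldr (apply_op N) (map (\<lambda>x. Bop g x ws1) (x # vs)) (up_state N) xs1"
    by (simp add: apply_op_def sum_distrib_left algebra_simps)
  finally show ?case .
qed

lemma part4:
  assumes "N \<le> M"
  shows "Sn g 0 N M u v w = (\<Prod>i=1..N. \<Prod>j=N+1..M. sh (v i - w j)) * ZN g N v w"
proof -
  let ?ws1 = "map w [1..<N+1]" and ?ws2 = "map w [N+1..<M+1]"
  have "[1..<(N+1)+(M-N)] = [1..<N+1] @ [N+1..<(N+1)+(M-N)]"
    by (rule upt_add_eq_append) simp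
  moreover have "(N+1)+(M-N) = M+1" using assms by simp
  ultimately have "[1..<M+1] = [1..<N+1] @ [N+1..<M+1]" by metis
  then have ws: "map w [1..<M+1] = ?ws1 @ ?ws2" by simp
  have M: "M = N + (M - N)" using assms by simp
  have dc: "down_conf N M = replicate N True @ replicate (M - N) False" by (simp add: down_conf_def)
  have "Sn g 0 N M u v w = foldr (apply_op M) (map (\<lambda>x. Bop g x (?ws1 @ ?ws2)) (map v [1..<N+1])) (up_state M)
       (replicate N True @ replicate (M - N) False)"
    unfolding Sn_def Let_def ws by (simp add: o_def dc del: upt_Suc)
  also have "\<dots> = prod_list (map (\<lambda>x. prod_list (map (\<lambda>w. sh (x - w)) ?ws2)) (map v [1..<N+1])) *
      foldr (apply_op N) (map (\<lambda>x. Bop g x ?ws1) (map v [1..<N+1])) (up_state N) (replicate N True)"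
    using foldr_B_split[of ?ws1 N ?ws2 "M - N" "replicate N True" g "map v [1..<N+1]"] assms by (simp del: upt_Suc)
  also have "foldr (apply_op N) (map (\<lambda>x. Bop g x ?ws1) (map v [1..<N+1])) (up_state N) (replicate N True) = ZN g N v w"
    unfolding ZN_def Sn_def Let_def by (simp add: down_conf_def o_def del: upt_Suc)
  also have "prod_list (map (\<lambda>x. prod_list (map (\<lambda>w. sh (x - w)) ?ws2)) (map v [1..<N+1]))
     = (\<Prod>i=1..N. \<Prod>j=N+1..M. sh (v i - w j))"
  proof -
    have e: "prod_list (map f [a..<Suc b]) = (\<Prod>i=a..b. f i)" for f :: "nat \<Rightarrow> complex" and a b
      by (subst prod.distinct_set_conv_list[symmetric]) (simp_all add: atLeastLessThanSuc_atLeastAtMost del: upt_Suc)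
    show ?thesis by (simp add: o_def e del: upt_Suc)
  qed
  finally show ?thesis .
qed

lemma ybe_site:
  "(\<Sum>y1\<in>UNIV. \<Sum>y2\<in>UNIV. Rent g (p - q) x2 x1 y1 y2 * mono g u [q, p] a b [y1, y2] [z1, z2])
   = (\<Sum>y1\<in>UNIV. \<Sum>y2\<in>UNIV. mono g u [p, q] a b [x1, x2] [y1, y2] * Rent g (p - q) y2 y1 z1 z2)"
  apply (cases a; cases b; cases x1; cases x2; cases z1; cases z2)
  apply (simp_all add: Rent_def UNIV_bool sh_exp exp_diff exp_add)
  apply (simp_all add: field_simps)
  done

fun Rop :: "complex \<Rightarrow> nat \<Rightarrow> complex \<Rightarrow> bool list \<Rightarrow> bool list \<Rightarrow> complex" where
  "Rop g 0 x (x1 # x2 # xs) (y1 # y2 # ys) = (if xs = ys then Rent g x x2 x1 y1 y2 else 0)"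
| "Rop g (Suc j) x (a # xs) (b # ys) = (if a = b then Rop g j x xs ys else 0)"
| "Rop g _ _ _ _ = 0"

lemma Rop_nz: "Rop g j x xs ys \<noteq> 0 \<Longrightarrow> length xs = length ys \<and> Suc j < length xs"
  by (induction g j x xs ys rule: Rop.induct) (auto split: if_splits)

lemma sum_if_eq2: "finite A \<Longrightarrow> d \<in> A \<Longrightarrow> (\<Sum>y\<in>A. (if d = y then P else 0) * f y) = (P::complex) * f d"
  using sum_if_eq[of A d P f] by (simp add: eq_commute)

lemma sum_if_eq3: "finite A \<Longrightarrow> d \<in> A \<Longrightarrow> (\<Sum>y\<in>A. f y * (if y = d then P else 0)) = f d * (P::complex)"
  using sum_if_eq[of A d P f] by (simp add: mult.commute)

lemma sum_if_eq4: "finite A \<Longrightarrow> d \<in> A \<Longrightarrow> (\<Sum>y\<in>A. f y * (if d = y then P else 0)) = f d * (P::complex)"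
  using sum_if_eq[of A d P f] by (simp add: mult.commute eq_commute)

lemma mm_zero_len:
  assumes "\<And>ys. length ys = M \<Longrightarrow> A xs ys = 0"
  shows "mm M A B xs zs = 0"
  using assms unfolding mm_def by simp

lemma mm_zero_len2:
  assumes "\<And>ys. length ys = M \<Longrightarrow> B ys zs = 0"
  shows "mm M A B xs zs = 0"
  using assms unfolding mm_def by simp

lemma Rop_mono:
  assumes "Suc j < length ws" "length ws = M"
  shows "mm M (Rop g j (ws ! j - ws ! Suc j)) (mono g u (ws[j := ws ! Suc j, Suc j := ws ! j]) a b) xs zs
       = mm M (mono g u ws a b) (Rop g j (ws ! j - ws ! Suc j)) xs zs"
  using assms
proof (induction j arbitrary: ws M a xs zs)
  case 0
  then obtain p q rest where ws: "ws = p # q # rest" by (cases ws; cases "tl ws") auto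
  obtain m where M: "M = Suc (Suc m)" "length rest = m" using 0 ws by auto
  let ?x = "p - q"
  show ?case
  proof (cases "length xs = M \<and> length zs = M")
    case False
    then consider "length xs \<noteq> M" | "length zs \<noteq> M" by blast
    then show ?thesis
    proof cases
      case 1
      note l = 1
      have "Rop g 0 ?x xs ys = 0" "mono g u ws a b xs ys = 0" if "length ys = M" for ys
        using Rop_nz[of g 0 ?x xs ys] mono_nz[of g u ws a b xs ys] that l 0 by auto
      then have "mm M (Rop g 0 ?x) (mono g u (q # p # rest) a b) xs zs = 0"
        "mm M (mono g u ws a b) (Rop g 0 ?x) xs zs = 0"
        by (auto intro!: mm_zero_len)
      then show ?thesis by (simp add: ws)
    next
      case 2
      note l = 2
      have "Rop g 0 ?x ys zs = 0" "mono g u (q # p # rest) a b ys zs = 0" if "length ys = M" for ys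
        using Rop_nz[of g 0 ?x ys zs] mono_nz[of g u "q # p # rest" a b ys zs] that l 0 ws by auto
      then have "mm M (Rop g 0 ?x) (mono g u (q # p # rest) a b) xs zs = 0"
        "mm M (mono g u ws a b) (Rop g 0 ?x) xs zs = 0"
        by (auto intro!: mm_zero_len2)
      then show ?thesis by (simp add: ws)
    qed
  next
    case True
    then obtain x1 x2 xs' z1 z2 zs' where xs: "xs = x1 # x2 # xs'" "length xs' = m"
      and zs: "zs = z1 # z2 # zs'" "length zs' = m"
      using M by (auto simp: length_Suc_conv)
    have ma: "mono g u (p' # q' # rest) a b (y1 # y2 # ys) (w1 # w2 # ws')
        = (\<Sum>c\<in>UNIV. mono g u [p', q'] a c [y1, y2] [w1, w2] * mono g u rest c b ys ws')" for p' q' y1 y2 ys w1 w2 ws'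
      using mono_append[of "[y1, y2]" "[p', q']" "[w1, w2]" g u rest a b ys ws'] by simp
    have "mm M (Rop g 0 ?x) (mono g u (q # p # rest) a b) xs zs
       = (\<Sum>y1\<in>UNIV. \<Sum>y2\<in>UNIV. Rent g ?x x2 x1 y1 y2 * mono g u (q # p # rest) a b (y1 # y2 # xs') zs)"
      unfolding mm_def M sum_LL_Suc using xs
      by (simp add: sum_if_eq2 finite_LL mult.assoc)
    also have "\<dots> = (\<Sum>c\<in>UNIV. (\<Sum>y1\<in>UNIV. \<Sum>y2\<in>UNIV. Rent g ?x x2 x1 y1 y2 * mono g u [q, p] a c [y1, y2] [z1, z2]) * mono g u rest c b xs' zs')"
      unfolding zs ma by (simp add: UNIV_bool algebra_simps)
    also have "\<dots> = (\<Sum>c\<in>UNIV. (\<Sum>y1\<in>UNIV. \<Sum>y2\<in>UNIV. mono g u [p, q] a c [x1, x2] [y1, y2] * Rent g ?x y2 y1 z1 z2) * mono g u rest c b xs' zs')"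
      by (simp only: ybe_site)
    also have "\<dots> = (\<Sum>y1\<in>UNIV. \<Sum>y2\<in>UNIV. mono g u (p # q # rest) a b xs (y1 # y2 # zs') * Rent g ?x y2 y1 z1 z2)"
      unfolding xs ma by (simp add: UNIV_bool algebra_simps)
    also have "\<dots> = mm M (mono g u ws a b) (Rop g 0 ?x) xs zs"
      unfolding mm_def M sum_LL_Suc using zs
      by (simp add: ws sum_if_eq3 sum_if_eq4 finite_LL)
    finally show ?thesis by (simp add: ws)
  qed
next
  case (Suc j)
  then obtain w ws1 where ws: "ws = w # ws1" by (cases ws) auto
  obtain m where M: "M = Suc m" "length ws1 = m" using Suc.prems ws by auto
  have j: "Suc j < length ws1" using Suc.prems ws by simp
  let ?x = "ws1 ! j - ws1 ! Suc j"
  let ?ws1' = "ws1[j := ws1 ! Suc j, Suc j := ws1 ! j]"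
  have ws': "ws[Suc j := ws ! Suc (Suc j), Suc (Suc j) := ws ! Suc j] = w # ?ws1'" by (simp add: ws)
  have x: "ws ! Suc j - ws ! Suc (Suc j) = ?x" by (simp add: ws)
  show ?case
  proof (cases xs; cases zs)
    fix x0 xs' z0 zs' assume xs: "xs = x0 # xs'" and zs: "zs = z0 # zs'"
    have "mm M (Rop g (Suc j) ?x) (mono g u (w # ?ws1') a b) xs zs
       = (\<Sum>c\<in>UNIV. Rent g (u - w) a x0 c z0 * mm m (Rop g j ?x) (mono g u ?ws1' c b) xs' zs')"
      unfolding mm_def M xs zs sum_LL_Suc
      by (cases x0) (simp_all add: UNIV_bool sum_distrib_left sum.distrib[symmetric] algebra_simps)
    also have "\<dots> = (\<Sum>c\<in>UNIV. Rent g (u - w) a x0 c z0 * mm m (mono g u ws1 c b) (Rop g j ?x) xs' zs')"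
      using Suc.IH[OF j M(2)] by simp
    also have "\<dots> = mm M (mono g u (w # ws1) a b) (Rop g (Suc j) ?x) xs zs"
      unfolding mm_def M xs zs sum_LL_Suc
      by (cases z0) (simp_all add: UNIV_bool sum_distrib_left sum_distrib_right sum.distrib[symmetric] algebra_simps)
    finally show ?thesis unfolding ws' x by (simp add: ws)
  qed (auto simp: mm_def ws)
qed

lemma foldr_intertwine:
  "list_all2 (\<lambda>A A'. mm M R A' = mm M A R) As As' \<Longrightarrow>
   apply_op M R (foldr (apply_op M) As' V) = foldr (apply_op M) As (apply_op M R V)"
proof (induction As As' rule: list_all2_induct)
  case Nil then show ?case by simp
next
  case (Cons A As A' As')
  have "apply_op M R (foldr (apply_op M) (A' # As') V) = apply_op M (mm M R A') (foldr (apply_op M) As' V)"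
    by (simp add: apply_op_mm)
  also have "\<dots> = apply_op M A (apply_op M R (foldr (apply_op M) As' V))"
    using Cons.hyps(1) by (simp add: apply_op_mm)
  finally show ?case using Cons.IH by simp
qed

lemma foldr_scale: "foldr (apply_op M) As (\<lambda>xs. c * V xs) = (\<lambda>xs. c * foldr (apply_op M) As V xs)"
  by (induction As) (auto simp: apply_op_def sum_distrib_left algebra_simps)

lemma Rop_ups: "Suc j < M \<Longrightarrow> Rop g j x xs (replicate M False) = (if xs = replicate M False then sh (x + g) else 0)"
proof (induction j arbitrary: M xs)
  case 0
  then obtain m where M: "M = Suc (Suc m)" by (cases M; cases "M - 1") auto
  show ?case
  proof (cases xs)
    case Nil then show ?thesis by (simp add: M)
  next
    case (Cons x1 r)
    show ?thesis
    proof (cases r)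
      case Nil then show ?thesis by (simp add: M Cons)
    next
      case (Cons x2 xs')
      then show ?thesis using \<open>xs = x1 # r\<close> by (cases x1; cases x2) (auto simp: M Rent_def)
    qed
  qed
next
  case (Suc j)
  then obtain m where M: "M = Suc m" and j: "Suc j < m" by (cases M) auto
  show ?case
  proof (cases xs)
    case Nil then show ?thesis by (simp add: M)
  next
    case (Cons a xs')
    then show ?thesis using Suc.IH[OF j] by (auto simp: M)
  qed
qed

lemma Rop_row: "Suc j < length d \<Longrightarrow> \<not> d ! j \<Longrightarrow> \<not> d ! Suc j \<Longrightarrow>
   Rop g j x d ys = (if ys = d then sh (x + g) else 0)"
proof (induction j arbitrary: d ys)
  case 0
  then obtain d' where d: "d = False # False # d'" by (cases d; cases "tl d") auto
  show ?case
  proof (cases ys)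
    case Nil then show ?thesis by (simp add: d)
  next
    case (Cons y1 r)
    show ?thesis
    proof (cases r)
      case Nil then show ?thesis by (simp add: d Cons)
    next
      case (Cons y2 ys')
      then show ?thesis using \<open>ys = y1 # r\<close> by (cases y1; cases y2) (auto simp: d Rent_def)
    qed
  qed
next
  case (Suc j)
  then obtain a d' where d: "d = a # d'" by (cases d) auto
  show ?case
  proof (cases ys)
    case Nil then show ?thesis by (simp add: d)
  next
    case (Cons b ys')
    then show ?thesis using Suc.IH[of d' ys'] Suc.prems by (auto simp: d)
  qed
qed

definition SnW where
  "SnW g n N M u v ws = foldr (apply_op M) (map (\<lambda>i. Cop g (u i) ws) [1..<n+1] @ map (\<lambda>j. Bop g (v j) ws) [1..<N+1]) (up_state M) (down_conf (N - n) M)"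

lemma Sn_W: "Sn g n N M u v w = SnW g n N M u v (map w [1..<M+1])"
  by (simp add: Sn_def SnW_def Let_def del: upt_Suc)

lemma list_all2_mapI: "(\<And>x. x \<in> set xs \<Longrightarrow> P (f x) (h x)) \<Longrightarrow> list_all2 P (map f xs) (map h xs)"
  by (induction xs) auto

lemma SnW_swap:
  assumes "N - n \<le> j" "Suc j < M" "length ws = M"
  shows "sh (ws ! j - ws ! Suc j + g) * SnW g n N M u v (ws[j := ws ! Suc j, Suc j := ws ! j])
       = sh (ws ! j - ws ! Suc j + g) * SnW g n N M u v ws"
proof -
  let ?x = "ws ! j - ws ! Suc j"
  let ?ws' = "ws[j := ws ! Suc j, Suc j := ws ! j]"
  let ?R = "Rop g j ?x"
  let ?As = "\<lambda>ws. map (\<lambda>i. Cop g (u i) ws) [1..<n+1] @ map (\<lambda>j. Bop g (v j) ws) [1..<N+1]"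
  let ?d = "down_conf (N - n) M"
  have comm: "mm M ?R (mono g u' ?ws' a b) = mm M (mono g u' ws a b) ?R" for u' a b
    using Rop_mono[of j ws M g u' a b] assms by (auto simp: fun_eq_iff)
  have la: "list_all2 (\<lambda>A A'. mm M ?R A' = mm M A ?R) (?As ws) (?As ?ws')"
    unfolding Cop_def Bop_def
    by (intro list_all2_appendI list_all2_mapI comm)
  have dl: "length ?d = M" using assms by (simp add: down_conf_def)
  have dj: "\<not> ?d ! j" "\<not> ?d ! Suc j" using assms by (auto simp: down_conf_def nth_append)
  have "sh (?x + g) * SnW g n N M u v ?ws' = apply_op M ?R (foldr (apply_op M) (?As ?ws') (up_state M)) ?d"
    unfolding apply_op_def SnW_def using Rop_row[of j ?d g ?x] dl dj assms
    by (simp add: sum_if_eq finite_LL mult.commute del: upt_Suc)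
  also have "\<dots> = foldr (apply_op M) (?As ws) (apply_op M ?R (up_state M)) ?d"
    unfolding foldr_intertwine[OF la] ..
  also have "apply_op M ?R (up_state M) = (\<lambda>xs. sh (?x + g) * up_state M xs)"
    unfolding apply_op_def up_state_def using Rop_ups[of j M g ?x] assms
    by (auto simp: fun_eq_iff sum_if_eq3 finite_LL)
  also have "foldr (apply_op M) (?As ws) (\<lambda>xs. sh (?x + g) * up_state M xs) ?d = sh (?x + g) * SnW g n N M u v ws"
    unfolding foldr_scale SnW_def by simp
  finally show ?thesis .
qed

lemma cont_foldr:
  "(\<And>X xs ys. X \<in> set Xs \<Longrightarrow> continuous_on UNIV (\<lambda>t. X t xs ys)) \<Longrightarrow>
   continuous_on UNIV (\<lambda>t. foldr (apply_op M) (map (\<lambda>X. X t) Xs) V xs)"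
proof (induction Xs arbitrary: xs)
  case Nil then show ?case by simp
next
  case (Cons X Xs)
  have h1: "continuous_on UNIV (\<lambda>t. X t xs ys)" for ys by (rule Cons.prems) simp
  have h2: "continuous_on UNIV (\<lambda>t. foldr (apply_op M) (map (\<lambda>X. X t) Xs) V ys)" for ys
    by (rule Cons.IH) (rule Cons.prems, simp)
  have e: "foldr (apply_op M) (map (\<lambda>X. X t) (X # Xs)) V xs = (\<Sum>ys\<in>LL M. X t xs ys * foldr (apply_op M) (map (\<lambda>X. X t) Xs) V ys)" for t
    by (simp add: apply_op_def)
  show ?case unfolding e
    by (intro continuous_on_sum continuous_on_mult h1 h2)
qed

lemma cont_SnW:
  assumes "\<And>F. F \<in> set Fs \<Longrightarrow> continuous_on UNIV F"
  shows "continuous_on UNIV (\<lambda>t. SnW g n N M u v (map (\<lambda>F. F t) Fs))"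
proof -
  let ?Xs = "map (\<lambda>i t. Cop g (u i) (map (\<lambda>F. F t) Fs)) [1..<n+1] @ map (\<lambda>j t. Bop g (v j) (map (\<lambda>F. F t) Fs)) [1..<N+1]"
  have e: "SnW g n N M u v (map (\<lambda>F. F t) Fs) = foldr (apply_op M) (map (\<lambda>X. X t) ?Xs) (up_state M) (down_conf (N - n) M)" for t
    unfolding SnW_def by (simp add: o_def del: upt_Suc)
  have cm: "continuous_on UNIV (\<lambda>t. mono g c (map (\<lambda>F. F t) Fs) a b xs ys)" for c a b xs ys
    using cont_mono[of "\<lambda>t. c" Fs g a b xs ys] assms by (auto intro: continuous_on_const)
  show ?thesis unfolding e
    by (rule cont_foldr) (auto simp: Cop_def Bop_def cm simp del: upt_Suc)
qed

lemma cont_upd: "continuous_on UNIV (\<lambda>t::complex. if P then t else c)"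
  by (cases P) (auto intro: continuous_on_const continuous_on_id)

lemma if_same_app: "(if x = a then f a else f x) = f x" by auto

lemma Sn_adj:
  assumes "N - n \<le> j" "Suc j < M"
  shows "Sn g n N M u v (w \<circ> Transposition.transpose (Suc j) (Suc (Suc j))) = Sn g n N M u v w"
proof -
  let ?\<tau> = "Transposition.transpose (Suc j) (Suc (Suc j))"
  let ?Fs1 = "map (\<lambda>i t. (w(Suc j := t)) (?\<tau> i)) [1..<M+1]"
  let ?Fs2 = "map (\<lambda>i t. (w(Suc j := t)) i) [1..<M+1]"
  let ?f = "\<lambda>t. SnW g n N M u v (map (\<lambda>F. F t) ?Fs1) - SnW g n N M u v (map (\<lambda>F. F t) ?Fs2)"
  have cont: "continuous_on UNIV ?f"
    by (intro continuous_intros cont_SnW) (auto simp: cont_upd simp del: upt_Suc)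
  have z: "sh (t + (g - w (Suc (Suc j)))) * ?f t = 0" for t
  proof -
    let ?wt = "w(Suc j := t)"
    let ?ws = "map ?wt [1..<M+1]"
    have l: "length ?ws = M" by simp
    have n1: "?ws ! j = t" "?ws ! Suc j = w (Suc (Suc j))" using assms by (simp_all add: nthw del: upt_Suc)
    have sw: "map (\<lambda>i. ?wt (?\<tau> i)) [1..<M+1] = ?ws[j := ?ws ! Suc j, Suc j := ?ws ! j]"
    proof (rule nth_equalityI)
      fix i assume "i < length (map (\<lambda>i. ?wt (?\<tau> i)) [1..<M+1])"
      then have i: "i < M" by (simp del: upt_Suc)
      show "map (\<lambda>i. ?wt (?\<tau> i)) [1..<M+1] ! i = ?ws[j := ?ws ! Suc j, Suc j := ?ws ! j] ! i"
        using i assms by (auto simp: nth_list_update nthw Transposition.transpose_def simp del: upt_Suc)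
    qed simp
    have A: "sh (?ws ! j - ?ws ! Suc j + g) * SnW g n N M u v (map (\<lambda>i. ?wt (?\<tau> i)) [1..<M+1])
       = sh (?ws ! j - ?ws ! Suc j + g) * SnW g n N M u v ?ws"
      unfolding sw by (rule SnW_swap) (use assms in simp_all)
    have m1: "map (\<lambda>F. F t) ?Fs1 = map (\<lambda>i. ?wt (?\<tau> i)) [1..<M+1]" by (simp del: upt_Suc)
    have m2: "map (\<lambda>F. F t) ?Fs2 = ?ws" by (simp del: upt_Suc)
    have a: "t + (g - w (Suc (Suc j))) = ?ws ! j - ?ws ! Suc j + g" unfolding n1 by simp
    show ?thesis unfolding m1 m2 a right_diff_distrib A by simp
  qed
  have "?f (w (Suc j)) = 0" by (rule cancel_sh[OF cont z])
  then show ?thesis by (simp add: Sn_W o_def if_same_app del: upt_Suc)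
qed

lemma transpose_conj:
  "a < b \<Longrightarrow> Transposition.transpose a (Suc b) =
     Transposition.transpose b (Suc b) \<circ> Transposition.transpose a b \<circ> Transposition.transpose b (Suc b)"
  by (auto simp: fun_eq_iff Transposition.transpose_def)

lemma Sn_transp_aux:
  assumes "N - n + 1 \<le> a" "a + Suc k \<le> M"
  shows "Sn g n N M u v (w \<circ> Transposition.transpose a (a + Suc k)) = Sn g n N M u v w"
  using assms
proof (induction k arbitrary: w)
  case 0
  have "Sn g n N M u v (w \<circ> Transposition.transpose (Suc (a - 1)) (Suc (Suc (a - 1)))) = Sn g n N M u v w"
    by (rule Sn_adj) (use 0 in auto)
  moreover have "Suc (a - 1) = a" using 0 by simp
  ultimately show ?case by (simp add: comp_def)
next
  case (Suc k)
  let ?b = "a + Suc k"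
  let ?t = "Transposition.transpose ?b (Suc ?b)"
  have adj: "Sn g n N M u v (w' \<circ> ?t) = Sn g n N M u v w'" for w'
  proof -
    have "Sn g n N M u v (w' \<circ> Transposition.transpose (Suc (?b - 1)) (Suc (Suc (?b - 1)))) = Sn g n N M u v w'"
      by (rule Sn_adj) (use Suc.prems in auto)
    moreover have "Suc (?b - 1) = ?b" by simp
    ultimately show ?thesis by (simp add: comp_def)
  qed
  have "w \<circ> Transposition.transpose a (a + Suc (Suc k)) = ((w \<circ> ?t) \<circ> Transposition.transpose a ?b) \<circ> ?t"
    using transpose_conj[of a ?b] by (simp add: o_assoc)
  then have "Sn g n N M u v (w \<circ> Transposition.transpose a (a + Suc (Suc k))) = Sn g n N M u v ((w \<circ> ?t) \<circ> Transposition.transpose a ?b)"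
    using adj by simp
  also have "\<dots> = Sn g n N M u v (w \<circ> ?t)"
    by (rule Suc.IH) (use Suc.prems in auto)
  also have "\<dots> = Sn g n N M u v w" by (rule adj)
  finally show ?case .
qed

lemma Sn_transp:
  assumes "a \<in> {N - n + 1..M}" "b \<in> {N - n + 1..M}"
  shows "Sn g n N M u v (w \<circ> Transposition.transpose a b) = Sn g n N M u v w"
proof (cases a b rule: linorder_cases)
  case less
  then obtain k where "b = Suc (a + k)" using less_imp_Suc_add by blast
  then have "b = a + Suc k" by simp
  then show ?thesis using Sn_transp_aux[of N n a k M g u v w] assms by simp
next
  case equal then show ?thesis by simp
next
  case greater
  then obtain k where "a = Suc (b + k)" using less_imp_Suc_add by blast
  then have "a = b + Suc k" by simp
  then show ?thesis using Sn_transp_aux[of N n b k M g u v w] assms by (simp add: transpose_commute)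
qed

lemma part1:
  assumes "p permutes {N - n + 1..M}"
  shows "Sn g n N M u v (w \<circ> p) = Sn g n N M u v w"
proof -
  have "\<forall>w. Sn g n N M u v (w \<circ> p) = Sn g n N M u v w"
    using assms finite_atLeastAtMost
  proof (induction p rule: permutes_induct)
    case id then show ?case by simp
  next
    case (swap a b p)
    show ?case
    proof
      fix w
      have "Sn g n N M u v (w \<circ> (Transposition.transpose a b \<circ> p)) = Sn g n N M u v ((w \<circ> Transposition.transpose a b) \<circ> p)"
        by (simp add: o_assoc)
      also have "\<dots> = Sn g n N M u v (w \<circ> Transposition.transpose a b)" using swap.IH by blast
      also have "\<dots> = Sn g n N M u v w" by (rule Sn_transp) (use swap in auto)
      finally show "Sn g n N M u v (w \<circ> (Transposition.transpose a b \<circ> p)) = Sn g n N M u v w" .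
    qed
  qed
  then show ?thesis by blast
qed

theorem lemma9:
  fixes g :: complex and N M :: nat and u v w :: "nat \<Rightarrow> complex"
  assumes NM: "1 \<le> N" "N \<le> M"
    and nz1: "\<And>i j. 1 \<le> i \<Longrightarrow> i \<le> N \<Longrightarrow> 1 \<le> j \<Longrightarrow> j \<le> M \<Longrightarrow> sh (v i - w j) \<noteq> 0"
    and nz2: "\<And>i j. 1 \<le> i \<Longrightarrow> i \<le> N \<Longrightarrow> 1 \<le> j \<Longrightarrow> j \<le> N \<Longrightarrow> j \<noteq> i \<Longrightarrow> sh (v i - v j - g) \<noteq> 0"
    and bethe: "\<And>i. 1 \<le> i \<Longrightarrow> i \<le> N \<Longrightarrow>
       (\<Prod>j=1..M. sh (v i - w j + g) / sh (v i - w j))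
       = (\<Prod>j\<in>{1..N} - {i}. sh (v i - v j + g) / sh (v i - v j - g))"
  shows "(\<forall>n\<in>{1..N}.
            (\<forall>p. p permutes {N - n + 1..M} \<longrightarrow> Sn g n N M u v (w \<circ> p) = Sn g n N M u v w)
          \<and> trig_poly (M - 1) (\<lambda>x. Sn g n N M (u(n := x)) v w)
          \<and> (\<forall>i\<in>{1..N - n}. Sn g n N M (u(n := w i - g)) v w = 0)
          \<and> Sn g n N M (u(n := w (N - n + 1))) v w
              = (\<Prod>i=1..M. sh (w (N - n + 1) - w i + g)) * Sn g (n - 1) N M u v w)
       \<and> Sn g 0 N M u v w = (\<Prod>i=1..N. \<Prod>j=N+1..M. sh (v i - w j)) * ZN g N v w"
proof (intro conjI ballI allI impI)
  fix n assume n: "n \<in> {1..N}"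
  show "Sn g n N M u v (w \<circ> p) = Sn g n N M u v w" if "p permutes {N - n + 1..M}" for p
    using part1[OF that] .
  show "trig_poly (M - 1) (\<lambda>x. Sn g n N M (u(n := x)) v w)"
    by (rule part2a) (use n NM in auto)
  show "Sn g n N M (u(n := w i - g)) v w = 0" if "i \<in> {1..N - n}" for i
    by (rule part2b) (use n NM that in auto)
  show "Sn g n N M (u(n := w (N - n + 1))) v w
              = (\<Prod>i=1..M. sh (w (N - n + 1) - w i + g)) * Sn g (n - 1) N M u v w"
    by (rule part3) (use n NM in auto)
next
  show "Sn g 0 N M u v w = (\<Prod>i=1..N. \<Prod>j=N+1..M. sh (v i - w j)) * ZN g N v w"
    by (rule part4) (use NM in auto)
qed

end
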